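(* If $T \in \mathcal{T}$ has order $n$, then $\gamma_{\rm gr}^t(T) = \frac{2}{3}(n+1)$.
   Context: A leaf is a vertex of degree $1$ and a support vertex is a vertex adjacent to a leaf. Operation $\mathcal{O}_1$: given a tree $T'$ and a support vertex $v$ of $T'$, add a new path $v_1v_2v_3$ (three new vertices) and the edge $vv_1$. The family $\mathcal{T}$ is the smallest family of trees containing the path $P_2$ and closed under operation $\mathcal{O}_1$. $N(v)$ denotes the open neighborhood of $v$. A sequence $S=(v_1,\ldots,v_k)$ of distinct vertices of a graph $G$ without isolated vertices is a legal sequence if $N(v_i)\setminus \bigcup_{j=1}^{i-1} N(v_j)\neq\emptyset$ for every $i\in\{2,\ldots,k\}$, and a total dominating sequence if moreover $\{v_1,\ldots,v_k\}$ is a total dominating set of $G$. $\gamma_{\rm gr}^t(G)$ is the maximum length of a total dominating sequence of $G$. *)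

theory Defs
  imports Complex_Main
begin

definition nbhd :: "'a set set \<Rightarrow> 'a \<Rightarrow> 'a set" where
  "nbhd E v = {u. {u, v} \<in> E}"

definition is_leaf :: "'a set \<Rightarrow> 'a set set \<Rightarrow> 'a \<Rightarrow> bool" where
  "is_leaf V E x \<longleftrightarrow> x \<in> V \<and> card (nbhd E x) = 1"

definition support_vertex :: "'a set \<Rightarrow> 'a set set \<Rightarrow> 'a \<Rightarrow> bool" where
  "support_vertex V E v \<longleftrightarrow> v \<in> V \<and> (\<exists>x. is_leaf V E x \<and> {v, x} \<in> E)"

inductive family_T :: "'a set \<Rightarrow> 'a set set \<Rightarrow> bool" where
  P2: "a \<noteq> b \<Longrightarrow> family_T {a, b} {{a, b}}"
| O1: "\<lbrakk> family_T V E; support_vertex V E v;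
         v1 \<notin> V; v2 \<notin> V; v3 \<notin> V; v1 \<noteq> v2; v1 \<noteq> v3; v2 \<noteq> v3 \<rbrakk>
       \<Longrightarrow> family_T (V \<union> {v1, v2, v3}) (E \<union> {{v, v1}, {v1, v2}, {v2, v3}})"

definition legal_seq :: "'a set \<Rightarrow> 'a set set \<Rightarrow> 'a list \<Rightarrow> bool" where
  "legal_seq V E S \<longleftrightarrow> distinct S \<and> set S \<subseteq> V \<and>
     (\<forall>i. 1 \<le> i \<and> i < length S \<longrightarrow>
        nbhd E (S ! i) - (\<Union>j<i. nbhd E (S ! j)) \<noteq> {})"

definition total_dominating_set :: "'a set \<Rightarrow> 'a set set \<Rightarrow> 'a set \<Rightarrow> bool" where
  "total_dominating_set V E D \<longleftrightarrow> D \<subseteq> V \<and> (\<forall>x\<in>V. \<exists>d\<in>D. {x, d} \<in> E)"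

definition total_dom_seq :: "'a set \<Rightarrow> 'a set set \<Rightarrow> 'a list \<Rightarrow> bool" where
  "total_dom_seq V E S \<longleftrightarrow> legal_seq V E S \<and> total_dominating_set V E (set S)"

definition gamma_gr_t :: "'a set \<Rightarrow> 'a set set \<Rightarrow> nat" where
  "gamma_gr_t V E = Max {length S | S. total_dom_seq V E S}"

end

theory Submission
  imports Defs
begin

lemma union_take:
  assumes "i \<le> length S"
  shows "(\<Union>j<i. f (S ! j)) = \<Union> (f ` set (take i S))"
proof -
  have "set (take i S) = (\<lambda>j. S ! j) ` {..<i}"
    using assms by (force simp: in_set_conv_nth nth_take)
  then show ?thesis by simp
qed

lemma legal_alt:
  "legal_seq V E S \<longleftrightarrow> distinct S \<and> set S \<subseteq> V \<and>
    (\<forall>ys u zs. S = ys @ u # zs \<and> ys \<noteq> [] \<longrightarrow> \<not> nbhd E u \<subseteq> \<Union> (nbhd E ` set ys))"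
proof
  assume L: "legal_seq V E S"
  show "distinct S \<and> set S \<subseteq> V \<and>
    (\<forall>ys u zs. S = ys @ u # zs \<and> ys \<noteq> [] \<longrightarrow> \<not> nbhd E u \<subseteq> \<Union> (nbhd E ` set ys))"
  proof (intro conjI allI impI)
    show "distinct S" "set S \<subseteq> V" using L by (auto simp: legal_seq_def)
    fix ys u zs assume H: "S = ys @ u # zs \<and> ys \<noteq> []"
    let ?i = "length ys"
    have "1 \<le> ?i" "?i < length S" using H by (auto simp: Suc_le_eq)
    then have "nbhd E (S ! ?i) - (\<Union>j<?i. nbhd E (S ! j)) \<noteq> {}" using L by (auto simp: legal_seq_def)
    moreover have "S ! ?i = u" using H by simp
    moreover have "(\<Union>j<?i. nbhd E (S ! j)) = \<Union> (nbhd E ` set ys)"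
      using union_take[of ?i S "nbhd E"] H by simp
    ultimately show "\<not> nbhd E u \<subseteq> \<Union> (nbhd E ` set ys)" by auto
  qed
next
  assume R: "distinct S \<and> set S \<subseteq> V \<and>
    (\<forall>ys u zs. S = ys @ u # zs \<and> ys \<noteq> [] \<longrightarrow> \<not> nbhd E u \<subseteq> \<Union> (nbhd E ` set ys))"
  show "legal_seq V E S" unfolding legal_seq_def
  proof (intro conjI allI impI)
    show "distinct S" "set S \<subseteq> V" using R by auto
    fix i assume i: "1 \<le> i \<and> i < length S"
    have dec: "S = take i S @ S ! i # drop (Suc i) S" using i by (simp add: id_take_nth_drop)
    have "take i S \<noteq> []" using i by auto
    then have "\<not> nbhd E (S!i) \<subseteq> \<Union> (nbhd E ` set (take i S))" using R dec by blast
    moreover have "(\<Union>j<i. nbhd E (S ! j)) = \<Union> (nbhd E ` set (take i S))"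
      using union_take[of i S "nbhd E"] i by simp
    ultimately show "nbhd E (S ! i) - (\<Union>j<i. nbhd E (S ! j)) \<noteq> {}" by auto
  qed
qed

lemma legal_snoc:
  assumes "legal_seq V E S" "w \<notin> set S" "w \<in> V"
    "S \<noteq> [] \<Longrightarrow> \<not> nbhd E w \<subseteq> \<Union> (nbhd E ` set S)"
  shows "legal_seq V E (S @ [w])"
  unfolding legal_alt
proof (intro conjI allI impI)
  show "distinct (S@[w])" "set (S@[w]) \<subseteq> V" using assms by (auto simp: legal_alt)
  fix ys u zs assume H: "S @ [w] = ys @ u # zs \<and> ys \<noteq> []"
  show "\<not> nbhd E u \<subseteq> \<Union> (nbhd E ` set ys)"
  proof (cases zs rule: rev_exhaust)
    case Nil
    then have "ys = S" "u = w" using H by auto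
    then show ?thesis using assms H by auto
  next
    case (snoc zs' z)
    then have "S @ [w] = (ys @ u # zs') @ [z]" using H by simp
    then have "S = ys @ u # zs'" by simp
    then show ?thesis using assms(1) H by (auto simp: legal_alt)
  qed
qed

lemma filter_split:
  "filter P S = us @ u # vs \<Longrightarrow> \<exists>ys zs. S = ys @ u # zs \<and> filter P ys = us \<and> P u"
proof (induction S arbitrary: us)
  case Nil then show ?case by simp
next
  case (Cons a S)
  show ?case
  proof (cases "P a")
    case True
    show ?thesis
    proof (cases us)
      case Nil
      then show ?thesis using Cons.prems True by (intro exI[of _ "[]"] exI[of _ S]) auto
    next
      case (Cons b us')
      then have "filter P S = us' @ u # vs" using Cons.prems True by simp
      from Cons.IH[OF this] obtain ys zs where "S = ys @ u # zs" "filter P ys = us'" "P u" by blast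
      then show ?thesis using Cons.prems True \<open>us = b # us'\<close> by (intro exI[of _ "a # ys"] exI[of _ zs]) auto
    qed
  next
    case False
    then have "filter P S = us @ u # vs" using Cons.prems by simp
    from Cons.IH[OF this] obtain ys zs where "S = ys @ u # zs" "filter P ys = us" "P u" by blast
    then show ?thesis using False by (intro exI[of _ "a # ys"] exI[of _ zs]) auto
  qed
qed

lemma legal_transfer:
  assumes "distinct S"
    and inj: "inj_on g (set (filter P S))"
    and sub: "\<And>u. u \<in> set S \<Longrightarrow> P u \<Longrightarrow> g u \<in> V'"
    and key: "\<And>ys u zs. S = ys @ u # zs \<Longrightarrow> P u \<Longrightarrow> filter P ys \<noteq> [] \<Longrightarrow>
        \<not> nbhd E' (g u) \<subseteq> \<Union> (nbhd E' ` g ` set (filter P ys))"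
  shows "legal_seq V' E' (map g (filter P S))"
  unfolding legal_alt
proof (intro conjI allI impI)
  show "distinct (map g (filter P S))" using assms by (simp add: distinct_map)
  show "set (map g (filter P S)) \<subseteq> V'" using sub by auto
  fix ys' w zs' assume H: "map g (filter P S) = ys' @ w # zs' \<and> ys' \<noteq> []"
  have "\<exists>us vs. filter P S = us @ vs \<and> ys' = map g us \<and> w # zs' = map g vs"
  proof -
    have "map g (filter P S) = ys' @ (w # zs')" using H by simp
    then show ?thesis by (simp only: map_eq_append_conv)
  qed
  then obtain us vs where 1: "filter P S = us @ vs" "ys' = map g us" "w # zs' = map g vs"
    by (elim exE conjE)
  have "vs \<noteq> []" using 1(3) by auto
  then obtain u vs' where "vs = u # vs'" by (cases vs) auto
  then have 2: "vs = u # vs'" "w = g u" using 1(3) by auto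
  have "filter P S = us @ u # vs'" using 1(1) 2(1) by simp
  from filter_split[OF this] obtain ys zs where
    3: "S = ys @ u # zs" "filter P ys = us" "P u" by blast
  have "us \<noteq> []" using H 1(2) by auto
  then show "\<not> nbhd E' w \<subseteq> \<Union> (nbhd E' ` set ys')"
    using key[OF 3(1) 3(3)] 3(2) 1(2) 2(2) by simp
qed


lemma fam_inv:
  "family_T V E \<Longrightarrow> finite V \<and> (\<forall>e\<in>E. \<exists>a b. a \<noteq> b \<and> a \<in> V \<and> b \<in> V \<and> e = {a,b})"
proof (induction rule: family_T.induct)
  case (P2 a b) then show ?case by auto
next
  case (O1 V E v v1 v2 v3)
  have "v \<in> V" using O1.hyps(2) by (auto simp: support_vertex_def)
  show ?case
  proof (intro conjI ballI)
    show "finite (V \<union> {v1, v2, v3})" using O1.IH by simp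
    fix e assume "e \<in> E \<union> {{v, v1}, {v1, v2}, {v2, v3}}"
    then consider "e \<in> E" | "e = {v,v1}" | "e = {v1,v2}" | "e = {v2,v3}" by blast
    then show "\<exists>a b. a \<noteq> b \<and> a \<in> V \<union> {v1, v2, v3} \<and> b \<in> V \<union> {v1, v2, v3} \<and> e = {a, b}"
    proof cases
      case 1
      then obtain a b where "a \<noteq> b" "a \<in> V" "b \<in> V" "e = {a,b}" using O1.IH by blast
      then show ?thesis by blast
    next
      case 2
      have "v \<noteq> v1 \<and> v \<in> V \<union> {v1, v2, v3} \<and> v1 \<in> V \<union> {v1, v2, v3} \<and> e = {v, v1}"
        using 2 O1.hyps(3) \<open>v \<in> V\<close> by auto
      then show ?thesis by blast
    next
      case 3
      have "v1 \<noteq> v2 \<and> v1 \<in> V \<union> {v1, v2, v3} \<and> v2 \<in> V \<union> {v1, v2, v3} \<and> e = {v1, v2}"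
        using 3 O1.hyps(6) by auto
      then show ?thesis by blast
    next
      case 4
      have "v2 \<noteq> v3 \<and> v2 \<in> V \<union> {v1, v2, v3} \<and> v3 \<in> V \<union> {v1, v2, v3} \<and> e = {v2, v3}"
        using 4 O1.hyps(8) by auto
      then show ?thesis by blast
    qed
  qed
qed

lemma base_case:
  assumes "a \<noteq> b"
  shows "(\<forall>S. legal_seq {a,b} {{a,b}} S \<longrightarrow> 3 * length S \<le> 2 * (card {a,b} + 1)) \<and>
         (\<exists>S. total_dom_seq {a,b} {{a,b}} S \<and> 3 * length S = 2 * (card {a,b} + 1))"
proof (intro conjI allI impI)
  fix S assume "legal_seq {a,b} {{a,b}} S"
  then have "distinct S" "set S \<subseteq> {a,b}" by (auto simp: legal_seq_def)
  moreover have "card (set S) \<le> card {a,b}" by (rule card_mono) (use \<open>set S \<subseteq> {a,b}\<close> in auto)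
  ultimately have "length S \<le> 2" using distinct_card[of S] assms by simp
  then show "3 * length S \<le> 2 * (card {a,b} + 1)" using assms by simp
next
  have nb: "nbhd {{a,b}} a = {b}" "nbhd {{a,b}} b = {a}" using assms
    by (auto simp: nbhd_def doubleton_eq_iff)
  have "legal_seq {a,b} {{a,b}} [a]" by (auto simp: legal_seq_def)
  then have "legal_seq {a,b} {{a,b}} ([a] @ [b])"
    by (rule legal_snoc) (use assms nb in auto)
  then have "total_dom_seq {a,b} {{a,b}} [a,b]"
    by (auto simp: total_dom_seq_def total_dominating_set_def insert_commute)
  then show "\<exists>S. total_dom_seq {a,b} {{a,b}} S \<and> 3 * length S = 2 * (card {a,b} + 1)"
    using assms by (intro exI[of _ "[a,b]"]) auto
qed


lemma distinct_prefix_uniq: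
  "distinct (ys@u#zs) \<Longrightarrow> ys@u#zs = ys'@u#zs' \<Longrightarrow> ys = ys'"
proof (induction ys arbitrary: ys')
  case Nil then show ?case by (cases ys') auto
next
  case (Cons a ys)
  show ?case
  proof (cases ys')
    case Nil then show ?thesis using Cons.prems by auto
  next
    case (Cons b ys'')
    then have "ys @ u # zs = ys'' @ u # zs'" "a = b" using Cons.prems by auto
    moreover have "distinct (ys @ u # zs)" using Cons.prems by simp
    ultimately show ?thesis using Cons.IH Cons by simp
  qed
qed

lemma card2: "card {a,b} \<le> 2"
  by (cases "a = b") auto

lemma step_case:
  assumes fam: "family_T V E" and sv: "support_vertex V E v"
    and new: "v1 \<notin> V" "v2 \<notin> V" "v3 \<notin> V" "v1 \<noteq> v2" "v1 \<noteq> v3" "v2 \<noteq> v3"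
    and IH: "(\<forall>S. legal_seq V E S \<longrightarrow> 3 * length S \<le> 2 * (card V + 1)) \<and>
         (\<exists>S. total_dom_seq V E S \<and> 3 * length S = 2 * (card V + 1))"
  defines "V' \<equiv> V \<union> {v1, v2, v3}" and "E' \<equiv> E \<union> {{v, v1}, {v1, v2}, {v2, v3}}"
  shows "(\<forall>S. legal_seq V' E' S \<longrightarrow> 3 * length S \<le> 2 * (card V' + 1)) \<and>
         (\<exists>S. total_dom_seq V' E' S \<and> 3 * length S = 2 * (card V' + 1))"
proof -
  have fin: "finite V" and edg: "\<forall>e\<in>E. \<exists>a b. a\<noteq>b \<and> a\<in>V \<and> b\<in>V \<and> e={a,b}"
    using fam_inv[OF fam] by auto
  obtain x where vV: "v \<in> V" and xleaf: "is_leaf V E x" and vx: "{v,x} \<in> E"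
    using sv unfolding support_vertex_def by blast
  have xV: "x \<in> V" and cx: "card (nbhd E x) = 1" using xleaf by (auto simp: is_leaf_def)
  have vnx: "v \<noteq> x"
  proof -
    from edg vx obtain a b where "a \<noteq> b" "{v,x} = {a,b}" by blast
    then show ?thesis by (auto simp: doubleton_eq_iff)
  qed
  have "v \<in> nbhd E x" using vx by (simp add: nbhd_def)
  then have Nx: "nbhd E x = {v}" using cx by (metis card_1_singletonE singletonD)
  have nE_sub: "nbhd E u \<subseteq> V" for u
  proof
    fix w assume "w \<in> nbhd E u"
    then have "{w,u} \<in> E" by (simp add: nbhd_def)
    with edg obtain a b where "a \<in> V" "b \<in> V" "{w,u} = {a,b}" by blast
    then show "w \<in> V" by (auto simp: doubleton_eq_iff)
  qed
  have nE_out: "u \<notin> V \<Longrightarrow> nbhd E u = {}" for u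
  proof -
    assume "u \<notin> V"
    show "nbhd E u = {}"
    proof (rule ccontr)
      assume "nbhd E u \<noteq> {}"
      then obtain w where "{w,u} \<in> E" by (auto simp: nbhd_def)
      with edg obtain a b where "a \<in> V" "b \<in> V" "{w,u} = {a,b}" by blast
      then show False using \<open>u \<notin> V\<close> by (auto simp: doubleton_eq_iff)
    qed
  qed
  have nT: "nbhd E' u = nbhd E u \<union> (if u = v then {v1} else {}) \<union> (if u = v1 then {v,v2} else {})
     \<union> (if u = v2 then {v1,v3} else {}) \<union> (if u = v3 then {v2} else {})" for u
    unfolding E'_def nbhd_def by (auto simp: doubleton_eq_iff)
  have vne: "v \<noteq> v1" "v \<noteq> v2" "v \<noteq> v3" using vV new by auto
  have nT_V: "u \<in> V \<Longrightarrow> u \<noteq> v \<Longrightarrow> nbhd E' u = nbhd E u" for u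
    using nT[of u] new by auto
  have nT_Vsub: "u \<in> V \<Longrightarrow> nbhd E' u \<subseteq> insert v1 (nbhd E u)" for u
    using nT[of u] new by auto
  have nT_v1: "nbhd E' v1 = {v,v2}" using nT[of v1] new vne nE_out[of v1] by auto
  have nT_v2: "nbhd E' v2 = {v1,v3}" using nT[of v2] new vne nE_out[of v2] by auto
  have nT_v3: "nbhd E' v3 = {v2}" using nT[of v3] new vne nE_out[of v3] by auto
  have nT_x: "nbhd E' x = {v}" using nT_V[OF xV] vnx Nx by auto
  have nsub: "nbhd E u \<subseteq> nbhd E' u" for u using nT[of u] by auto
  have cardV': "card V' = card V + 3" using fin new by (simp add: V'_def)
  have upper: "3 * length S \<le> 2 * (card V' + 1)" if L: "legal_seq V' E' S" for S
  proof -
    have dS: "distinct S" and sS: "set S \<subseteq> V'" using L by (auto simp: legal_seq_def)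
    have LA: "\<And>ys u zs. S = ys@u#zs \<Longrightarrow> ys \<noteq> [] \<Longrightarrow> \<not> nbhd E' u \<subseteq> \<Union>(nbhd E' ` set ys)"
      using L unfolding legal_alt by blast
    define c where "c = (\<exists>ys zs. S = ys@v1#zs \<and> v \<notin> \<Union>(nbhd E' ` set ys))"
    define P where "P = (\<lambda>w. w \<in> V \<or> (w = v1 \<and> c))"
    define g where "g = (\<lambda>w. if w = v1 then x else w)"
    have xS: "c \<Longrightarrow> x \<notin> set S"
    proof
      assume c and xin: "x \<in> set S"
      from \<open>c\<close> obtain ys zs where S1: "S = ys@v1#zs" and nv: "v \<notin> \<Union>(nbhd E' ` set ys)"
        by (auto simp: c_def)
      have "x \<notin> set ys" using nv nT_x by auto
      then have "x \<in> set zs" using xin S1 xV new by auto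
      then obtain zs1 zs2 where "zs = zs1 @ x # zs2" by (meson split_list)
      then have "S = (ys@v1#zs1) @ x # zs2" using S1 by simp
      from LA[OF this] have "\<not> nbhd E' x \<subseteq> \<Union>(nbhd E' ` set (ys@v1#zs1))" by simp
      moreover have "v \<in> nbhd E' v1" using nT_v1 by simp
      ultimately show False using nT_x by auto
    qed
    have leg': "legal_seq V E (map g (filter P S))"
    proof (rule legal_transfer)
      show "distinct S" by (rule dS)
      show "inj_on g (set (filter P S))" using xS new unfolding inj_on_def g_def P_def by auto
      show "\<And>u. u\<in>set S \<Longrightarrow> P u \<Longrightarrow> g u \<in> V" using xV new by (auto simp: P_def g_def)
      fix ys u zs assume S1: "S = ys@u#zs" and Pu: "P u" and ne: "filter P ys \<noteq> []"
      have ysne: "ys \<noteq> []" using ne by auto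
      let ?U = "\<Union>(nbhd E' ` set ys)"
      let ?U' = "\<Union>(nbhd E ` g ` set (filter P ys))"
      have UU: "?U' \<subseteq> ?U"
      proof
        fix y assume "y \<in> ?U'"
        then obtain w where w: "w \<in> set ys" "P w" "y \<in> nbhd E (g w)" by auto
        show "y \<in> ?U"
        proof (cases "w = v1")
          case True
          then have "y = v" using w Nx by (simp add: g_def)
          then show ?thesis using w True nT_v1 by auto
        next
          case False
          then have "y \<in> nbhd E' w" using w nsub by (auto simp: g_def)
          then show ?thesis using w by auto
        qed
      qed
      from LA[OF S1 ysne] have LU: "\<not> nbhd E' u \<subseteq> ?U" .
      show "\<not> nbhd E (g u) \<subseteq> ?U'"
      proof (cases "u = v1")
        case True
        then have c using Pu new by (auto simp: P_def)
        then obtain ys0 zs0 where S0: "S = ys0@v1#zs0" "v \<notin> \<Union>(nbhd E' ` set ys0)"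
          by (auto simp: c_def)
        then have "ys0 = ys" using distinct_prefix_uniq S1 True dS by metis
        then have "v \<notin> ?U'" using UU S0 by auto
        then show ?thesis using True Nx by (simp add: g_def)
      next
        case False
        then have uV: "u \<in> V" using Pu by (auto simp: P_def)
        show ?thesis
        proof (cases "u = v")
          case True
          have "x \<notin> ?U'"
          proof
            assume "x \<in> ?U'"
            then obtain w where w: "w \<in> set ys" "P w" "x \<in> nbhd E (g w)" by auto
            show False
            proof (cases "w = v1")
              case True then have "x \<in> nbhd E x" using w by (simp add: g_def)
              then show False using Nx vnx by auto
            next
              case False then have "x \<in> nbhd E w" using w by (simp add: g_def)
              then have "w \<in> nbhd E x" by (simp add: nbhd_def insert_commute)
              then have "w = v" using Nx by auto
              then show False using w(1) S1 dS \<open>u = v\<close> by auto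
            qed
          qed
          moreover have "x \<in> nbhd E v" using vx by (simp add: nbhd_def insert_commute)
          ultimately show ?thesis using True False by (auto simp: g_def)
        next
          case uv: False
          then have "nbhd E' u = nbhd E u" using nT_V uV by simp
          moreover have "g u = u" using False by (simp add: g_def)
          ultimately show ?thesis using LU UU by (metis subset_trans)
        qed
      qed
    qed
    with IH have b1: "3 * length (filter P S) \<le> 2*(card V+1)" by fastforce
    have b2: "length S \<le> length (filter P S) + 2"
    proof -
      have len: "length S = length (filter P S) + length (filter (\<lambda>w. \<not> P w) S)"
        by (simp add: sum_length_filter_compl)
      have dn: "distinct (filter (\<lambda>w. \<not>P w) S)" using dS by simp
      have sub3: "set (filter (\<lambda>w. \<not>P w) S) \<subseteq> {v1,v2,v3}" using sS by (auto simp: P_def V'_def)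
      have no13: "\<not> (v1 \<in> set S \<and> \<not> c \<and> v3 \<in> set S)"
      proof
        assume A: "v1 \<in> set S \<and> \<not> c \<and> v3 \<in> set S"
        then obtain ys zs where S1: "S = ys@v1#zs" by (meson split_list)
        have vU: "v \<in> \<Union>(nbhd E' ` set ys)" using A S1 by (auto simp: c_def)
        show False
        proof (cases "v3 \<in> set ys")
          case True
          then have "v2 \<in> \<Union>(nbhd E' ` set ys)" using nT_v3 by auto
          then have "nbhd E' v1 \<subseteq> \<Union>(nbhd E' ` set ys)" using vU nT_v1 by auto
          moreover have "ys \<noteq> []" using True by auto
          ultimately show False using LA S1 by blast
        next
          case False
          then have "v3 \<in> set zs" using A S1 new by auto
          then obtain zs1 zs2 where "zs = zs1@v3#zs2" by (meson split_list)
          then have S2: "S = (ys@v1#zs1)@v3#zs2" using S1 by simp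
          have "nbhd E' v3 \<subseteq> \<Union>(nbhd E' ` set (ys@v1#zs1))" using nT_v3 nT_v1 by auto
          then show False using LA[OF S2] by simp
        qed
      qed
      have "set (filter (\<lambda>w. \<not>P w) S) \<subseteq> {v2,v3} \<or> set (filter (\<lambda>w. \<not>P w) S) \<subseteq> {v1,v2}"
        using sub3 no13 by (auto simp: P_def)
      then have "card (set (filter (\<lambda>w. \<not>P w) S)) \<le> 2"
      proof
        assume "set (filter (\<lambda>w. \<not>P w) S) \<subseteq> {v2,v3}"
        then have "card (set (filter (\<lambda>w. \<not>P w) S)) \<le> card {v2,v3}" by (rule card_mono[rotated]) auto
        then show ?thesis using card2[of v2 v3] by linarith
      next
        assume "set (filter (\<lambda>w. \<not>P w) S) \<subseteq> {v1,v2}"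
        then have "card (set (filter (\<lambda>w. \<not>P w) S)) \<le> card {v1,v2}" by (rule card_mono[rotated]) auto
        then show ?thesis using card2[of v1 v2] by linarith
      qed
      then show ?thesis using len distinct_card[OF dn] by linarith
    qed
    have "3 * length S \<le> 3 * length (filter P S) + 6" using b2 by linarith
    then show ?thesis using b1 cardV' by simp
  qed
  obtain S0 where T0: "total_dom_seq V E S0" and l0: "3*length S0 = 2*(card V+1)" using IH by blast
  have L0: "legal_seq V E S0" and D0: "total_dominating_set V E (set S0)"
    using T0 by (auto simp: total_dom_seq_def)
  have S0V: "set S0 \<subseteq> V" using L0 by (auto simp: legal_seq_def)
  have S0ne: "S0 \<noteq> []" using l0 by auto
  have UV: "\<Union>(nbhd E' ` set S0) \<subseteq> insert v1 V" using nT_Vsub nE_sub S0V by blast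
  have L0': "legal_seq V' E' S0"
  proof -
    have "legal_seq V' E' (map id (filter (\<lambda>_. True) S0))"
    proof (rule legal_transfer)
      show "distinct S0" using L0 by (auto simp: legal_seq_def)
      show "inj_on id (set (filter (\<lambda>_. True) S0))" by simp
      show "\<And>u. u \<in> set S0 \<Longrightarrow> True \<Longrightarrow> id u \<in> V'" using S0V by (auto simp: V'_def)
      fix ys u zs assume H: "S0 = ys@u#zs" "True" "filter (\<lambda>_. True) ys \<noteq> []"
      then have "\<not> nbhd E u \<subseteq> \<Union>(nbhd E ` set ys)" using L0 unfolding legal_alt by auto
      then obtain y where y: "y \<in> nbhd E u" "y \<notin> \<Union>(nbhd E ` set ys)" by auto
      have "y \<in> V" using nE_sub y by auto
      have "set ys \<subseteq> V" using S0V H by auto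
      then have "y \<notin> \<Union>(nbhd E' ` set ys)" using y \<open>y \<in> V\<close> nT_Vsub new by fastforce
      moreover have "y \<in> nbhd E' u" using y nsub by auto
      ultimately show "\<not> nbhd E' (id u) \<subseteq> \<Union>(nbhd E' ` id ` set (filter (\<lambda>_. True) ys))" by auto
    qed
    then show ?thesis by simp
  qed
  have L1: "legal_seq V' E' (S0 @ [v2])"
  proof (rule legal_snoc[OF L0'])
    show "v2 \<notin> set S0" using S0V new by auto
    show "v2 \<in> V'" by (simp add: V'_def)
    show "\<not> nbhd E' v2 \<subseteq> \<Union>(nbhd E' ` set S0)" using UV nT_v2 new by auto
  qed
  have L2: "legal_seq V' E' ((S0 @ [v2]) @ [v3])"
  proof (rule legal_snoc[OF L1])
    show "v3 \<notin> set (S0 @ [v2])" using S0V new by auto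
    show "v3 \<in> V'" by (simp add: V'_def)
    show "\<not> nbhd E' v3 \<subseteq> \<Union>(nbhd E' ` set (S0 @ [v2]))" using UV nT_v2 nT_v3 new by auto
  qed
  have D: "total_dominating_set V' E' (set (S0 @ [v2, v3]))"
    unfolding total_dominating_set_def
  proof (intro conjI ballI)
    show "set (S0 @ [v2, v3]) \<subseteq> V'" using S0V by (auto simp: V'_def)
    fix y assume "y \<in> V'"
    then consider "y \<in> V" | "y = v1" | "y = v2" | "y = v3" by (auto simp: V'_def)
    then show "\<exists>d\<in>set (S0 @ [v2, v3]). {y, d} \<in> E'"
    proof cases
      case 1
      then obtain d where d: "d \<in> set S0" "{y,d} \<in> E" using D0 by (auto simp: total_dominating_set_def)
      then have "{y,d} \<in> E'" by (simp add: E'_def)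
      then show ?thesis using d(1) by auto
    next
      case 2
      have "{y,v2} \<in> E'" using 2 by (simp add: E'_def)
      then show ?thesis by auto
    next
      case 3
      have "{y,v3} \<in> E'" using 3 by (simp add: E'_def)
      then show ?thesis by auto
    next
      case 4
      have "{y,v2} = {v2,v3}" using 4 by blast
      then have "{y,v2} \<in> E'" by (simp add: E'_def)
      then show ?thesis by auto
    qed
  qed
  have "total_dom_seq V' E' (S0 @ [v2, v3])" using L2 D by (simp add: total_dom_seq_def)
  moreover have "3 * length (S0 @ [v2, v3]) = 2 * (card V' + 1)" using l0 cardV' by simp
  ultimately show ?thesis using upper by blast
qed


lemma main_lemma:
  assumes "family_T V E"
  shows "(\<forall>S. legal_seq V E S \<longrightarrow> 3 * length S \<le> 2 * (card V + 1)) \<and>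
         (\<exists>S. total_dom_seq V E S \<and> 3 * length S = 2 * (card V + 1))"
  using assms
proof (induction rule: family_T.induct)
  case (P2 a b) then show ?case by (rule base_case)
next
  case (O1 V E v v1 v2 v3)
  show ?case by (rule step_case[OF O1.hyps(1-8) O1.IH])
qed

theorem mainTheorem10:
  fixes V :: "'a set" and E :: "'a set set" and n :: nat
  assumes "family_T V E" and "card V = n"
  shows "real (gamma_gr_t V E) = 2 / 3 * (real n + 1)"
proof -
  note M = main_lemma[OF assms(1)]
  obtain S0 where T0: "total_dom_seq V E S0" and l0: "3 * length S0 = 2 * (card V + 1)"
    using M by blast
  let ?A = "{length S | S. total_dom_seq V E S}"
  have le: "y \<le> length S0" if "y \<in> ?A" for y
  proof -
    from that obtain S where "y = length S" "total_dom_seq V E S" by blast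
    then have "3 * y \<le> 2 * (card V + 1)" using M by (auto simp: total_dom_seq_def)
    then show ?thesis using l0 by linarith
  qed
  have fin: "finite ?A" by (rule finite_subset[of _ "{..length S0}"]) (use le in auto)
  have "gamma_gr_t V E = length S0" unfolding gamma_gr_t_def
    by (rule Max_eqI[OF fin]) (use le T0 in auto)
  then have h: "3 * gamma_gr_t V E = 2 * (n + 1)" using l0 assms(2) by simp
  have "real (3 * gamma_gr_t V E) = real (2 * (n + 1))" by (simp only: h)
  then have "3 * real (gamma_gr_t V E) = 2 * (real n + 1)" by simp
  then show ?thesis by simp
qed

end
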